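(* Let $\rho$ be either smooth tempered of exponential type or Gaussian, $\rho(x)=\beta e^{-\alpha|x|^2}$. There exists $C>0$ such that for every $n\in\mathbb N$, $h\in(0,1]$, $\tau>0$ and every $x\in\mathbb R^d$ with $|x|\ge\tau+(n+1)h$, $$\|T_h^n(x,dy)-d\nu_h\|_{TV}\ge1-Cp(\tau),$$ where $p(\tau)=e^{-2\alpha\tau(\tau-h)}$ in the Gaussian case and $p(\tau)=\int_{|y|\ge\tau}\rho(y)^2dy$ in the tempered case.
   Context: $\rho\in C^1(\mathbb R^d)$ strictly positive, bounded, $\int\rho\,dx=1$. Smooth tempered of exponential type means $\rho\in C^\infty$ and there are $C_\beta>0$, $R>0$, $\kappa_0>0$ with $|\partial^\beta\rho(x)|\le C_\beta\rho(x)$ for all $\beta$ and $\sum_i\partial_{x_i}^2\rho(x)\ge\kappa_0\rho(x)$ for $|x|\ge R$. $m_h(x)=\int_{|y-x|<h}\rho(y)dy$. $T_h$ is the Markov operator $T_hf(x)=\frac1{m_h(x)}\int_{|y-x|<h}f(y)\rho(y)dy$, with kernel $t_h(x,dy)=\frac{\rho(y)}{m_h(x)}\mathbf 1_{|x-y|<h}dy$; $T_h^n(x,dy)$ is the $n$-step kernel. $d\nu_h=Z_h^{-1}m_h(x)\rho(x)dx$ is the stationary probability measure ($Z_h$ normalizing). For probability measures, $\|\mu-\nu\|_{TV}=\sup_A|\mu(A)-\nu(A)|$ over measurable $A$. *)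

theory Defs
  imports "HOL-Analysis.Analysis"
begin

definition partial_dir :: "'a::euclidean_space \<Rightarrow> ('a \<Rightarrow> real) \<Rightarrow> 'a \<Rightarrow> real" where
  "partial_dir i f x = deriv (\<lambda>t. f (x + t *\<^sub>R i)) 0"

fun partials :: "'a::euclidean_space list \<Rightarrow> ('a \<Rightarrow> real) \<Rightarrow> 'a \<Rightarrow> real" where
  "partials [] f = f"
| "partials (i # is) f = partial_dir i (partials is f)"

definition C1_fun :: "('a::euclidean_space \<Rightarrow> real) \<Rightarrow> bool" where
  "C1_fun f \<longleftrightarrow> (\<forall>x. f differentiable at x) \<and> (\<forall>i\<in>Basis. continuous_on UNIV (partial_dir i f))"

definition smooth_fun :: "('a::euclidean_space \<Rightarrow> real) \<Rightarrow> bool" where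
  "smooth_fun f \<longleftrightarrow> (\<forall>is. set is \<subseteq> Basis \<longrightarrow> (\<forall>x. partials is f differentiable at x))"

definition standing_density :: "('a::euclidean_space \<Rightarrow> real) \<Rightarrow> bool" where
  "standing_density \<rho> \<longleftrightarrow> C1_fun \<rho> \<and> (\<forall>x. \<rho> x > 0) \<and> bounded (range \<rho>)
     \<and> integrable lborel \<rho> \<and> (LINT x|lborel. \<rho> x) = 1"

definition tempered_exp :: "('a::euclidean_space \<Rightarrow> real) \<Rightarrow> bool" where
  "tempered_exp \<rho> \<longleftrightarrow> smooth_fun \<rho>
     \<and> (\<forall>is. set is \<subseteq> Basis \<longrightarrow> (\<exists>C>0. \<forall>x. \<bar>partials is \<rho> x\<bar> \<le> C * \<rho> x))
     \<and> (\<exists>R>0. \<exists>\<kappa>0>0. \<forall>x. norm x \<ge> R \<longrightarrow> (\<Sum>i\<in>Basis. partials [i, i] \<rho> x) \<ge> \<kappa>0 * \<rho> x)"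

definition mh :: "('a::euclidean_space \<Rightarrow> real) \<Rightarrow> real \<Rightarrow> 'a \<Rightarrow> real" where
  "mh \<rho> h x = (LINT y:ball x h|lborel. \<rho> y)"

fun Tn :: "('a::euclidean_space \<Rightarrow> real) \<Rightarrow> real \<Rightarrow> nat \<Rightarrow> 'a \<Rightarrow> 'a set \<Rightarrow> real" where
  "Tn \<rho> h 0 x A = indicator A x"
| "Tn \<rho> h (Suc n) x A = (LINT y:ball x h|lborel. Tn \<rho> h n y A * \<rho> y) / mh \<rho> h x"

definition nu_h :: "('a::euclidean_space \<Rightarrow> real) \<Rightarrow> real \<Rightarrow> 'a set \<Rightarrow> real" where
  "nu_h \<rho> h A = (LINT y:A|lborel. mh \<rho> h y * \<rho> y) / (LINT y|lborel. mh \<rho> h y * \<rho> y)"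

definition tv_dist :: "('a::euclidean_space set \<Rightarrow> real) \<Rightarrow> ('a set \<Rightarrow> real) \<Rightarrow> real" where
  "tv_dist \<mu> \<nu> = Sup {\<bar>\<mu> A - \<nu> A\<bar> | A. A \<in> sets borel}"

end

theory Submission
  imports Defs
begin

lemma partial_dir_eq:
  assumes "(f has_derivative D) (at x)"
  shows "partial_dir i f x = D i"
proof -
  have bl: "bounded_linear D" using assms has_derivative_bounded_linear by blast
  have h1: "((\<lambda>t::real. x + t *\<^sub>R i) has_derivative (\<lambda>t. t *\<^sub>R i)) (at 0)"
    by (auto intro!: derivative_eq_intros)
  have h2: "(f has_derivative D) (at (x + 0 *\<^sub>R i))" using assms by simp
  have "((\<lambda>t. f (x + t *\<^sub>R i)) has_derivative (\<lambda>t. D (t *\<^sub>R i))) (at 0)"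
    using diff_chain_at[OF h1 h2] by (simp add: o_def)
  moreover have "(\<lambda>t. D (t *\<^sub>R i)) = (*) (D i)"
    using bl by (simp add: fun_eq_iff linear_simps(5) bounded_linear.linear mult.commute)
  ultimately have "((\<lambda>t. f (x + t *\<^sub>R i)) has_field_derivative D i) (at 0)"
    by (simp add: has_field_derivative_def)
  then show ?thesis unfolding partial_dir_def by (rule DERIV_imp_deriv)
qed

lemma harnack_log:
  fixes \<rho> :: "'a::euclidean_space \<Rightarrow> real"
  assumes sd: "standing_density \<rho>" and te: "tempered_exp \<rho>"
  shows "\<exists>M\<ge>0. \<forall>y z. \<bar>ln (\<rho> z) - ln (\<rho> y)\<bar> \<le> M * norm (z - y)"
proof -
  have pos: "\<And>x. \<rho> x > 0" using sd by (simp add: standing_density_def)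
  have diff: "\<And>x. \<rho> differentiable at x" using sd by (simp add: standing_density_def C1_fun_def)
  define D where "D x = frechet_derivative \<rho> (at x)" for x
  have Dd: "(\<rho> has_derivative D x) (at x)" for x
    unfolding D_def using diff[of x] by (simp only: frechet_derivative_works)
  have bl: "\<And>x. bounded_linear (D x)" using Dd has_derivative_bounded_linear by blast
  have "\<forall>i\<in>Basis. \<exists>C. C > 0 \<and> (\<forall>x. \<bar>D x i\<bar> \<le> C * \<rho> x)"
  proof
    fix i :: 'a assume i: "i \<in> Basis"
    then have "set [i] \<subseteq> Basis" by simp
    then obtain C where "C > 0" "\<forall>x. \<bar>partials [i] \<rho> x\<bar> \<le> C * \<rho> x"
      using te unfolding tempered_exp_def by blast
    moreover have "partials [i] \<rho> x = D x i" for x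
      using partial_dir_eq[OF Dd[of x], of i] by simp
    ultimately show "\<exists>C. C > 0 \<and> (\<forall>x. \<bar>D x i\<bar> \<le> C * \<rho> x)" by auto
  qed
  then have "\<exists>Cf. \<forall>i\<in>Basis. Cf i > 0 \<and> (\<forall>x. \<bar>D x i\<bar> \<le> Cf i * \<rho> x)"
    by (rule bchoice)
  then obtain Cf where Cf0: "\<forall>i\<in>Basis. Cf i > 0 \<and> (\<forall>x. \<bar>D x i\<bar> \<le> Cf i * \<rho> x)"
    by blast
  have Cf: "\<And>i x. i \<in> Basis \<Longrightarrow> \<bar>D x i\<bar> \<le> Cf i * \<rho> x" "\<And>i. i \<in> Basis \<Longrightarrow> Cf i > 0"
    using Cf0 by auto
  define M where "M = (\<Sum>i\<in>Basis. Cf i)"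
  have M0: "M \<ge> 0" unfolding M_def using Cf(2) by (simp add: less_imp_le sum_nonneg)
  have Dbound: "\<bar>D x v\<bar> \<le> M * \<rho> x * norm v" for x v
  proof -
    have "D x v = D x (\<Sum>i\<in>Basis. (v \<bullet> i) *\<^sub>R i)" by (simp add: euclidean_representation)
    also have "\<dots> = (\<Sum>i\<in>Basis. (v \<bullet> i) * D x i)"
      using bl[of x] by (simp add: linear_sum linear_simps(5) bounded_linear.linear o_def)
    finally have "\<bar>D x v\<bar> \<le> (\<Sum>i\<in>Basis. \<bar>(v \<bullet> i) * D x i\<bar>)" by (simp add: sum_abs)
    also have "\<dots> \<le> (\<Sum>i\<in>Basis. norm v * (Cf i * \<rho> x))"
      by (intro sum_mono) (simp add: abs_mult Basis_le_norm Cf(1) mult_mono')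
    also have "\<dots> = M * \<rho> x * norm v" by (simp add: M_def sum_distrib_left sum_distrib_right mult_ac)
    finally show ?thesis .
  qed
  have dln: "((\<lambda>x. ln (\<rho> x)) has_derivative (\<lambda>v. inverse (\<rho> x) * D x v)) (at x within UNIV)" for x
    using Dd[of x] pos[of x] by (auto intro!: derivative_eq_intros)
  have on: "onorm (\<lambda>v. inverse (\<rho> x) * D x v) \<le> M" for x
  proof (rule onorm_le)
    fix v
    have "norm (inverse (\<rho> x) * D x v) = \<bar>D x v\<bar> / \<rho> x" using pos[of x] by (simp add: abs_mult field_simps)
    also have "\<dots> \<le> M * norm v" using Dbound[of x v] pos[of x] by (simp add: divide_le_eq mult_ac)
    finally show "norm (inverse (\<rho> x) * D x v) \<le> M * norm v" .
  qed
  have "\<forall>y z. \<bar>ln (\<rho> z) - ln (\<rho> y)\<bar> \<le> M * norm (z - y)"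
    using differentiable_bound[OF convex_UNIV dln on] by (simp)
  then show ?thesis using M0 by blast
qed

lemma sd_facts:
  fixes \<rho> :: "'a::euclidean_space \<Rightarrow> real"
  assumes "standing_density \<rho>"
  shows "\<And>x. \<rho> x > 0" "integrable lborel \<rho>" "\<rho> \<in> borel_measurable lborel" "\<exists>B. \<forall>x. \<rho> x \<le> B"
proof -
  show "\<And>x. \<rho> x > 0" "integrable lborel \<rho>" using assms by (auto simp: standing_density_def)
  then show "\<rho> \<in> borel_measurable lborel" by auto
  have "bounded (range \<rho>)" using assms by (auto simp: standing_density_def)
  then show "\<exists>B. \<forall>x. \<rho> x \<le> B" by (auto simp: bounded_real abs_le_iff)
qed

lemma int_ind:
  fixes \<rho> :: "'a::euclidean_space \<Rightarrow> real"
  assumes "integrable lborel \<rho>" "A \<in> sets borel"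
  shows "integrable lborel (\<lambda>y. indicator A y *\<^sub>R \<rho> y)"
  using assms by (intro integrable_mult_indicator) auto

lemma mh_nonneg:
  fixes \<rho> :: "'a::euclidean_space \<Rightarrow> real"
  assumes "standing_density \<rho>"
  shows "mh \<rho> h x \<ge> 0"
  using sd_facts(1)[OF assms] unfolding mh_def set_lebesgue_integral_def
  by (intro Bochner_Integration.integral_nonneg) (simp add: less_imp_le)

lemma mh_pos:
  fixes \<rho> :: "'a::euclidean_space \<Rightarrow> real"
  assumes sd: "standing_density \<rho>" and h: "h > 0"
  shows "mh \<rho> h x > 0"
proof (rule ccontr)
  assume "\<not> mh \<rho> h x > 0"
  then have z: "mh \<rho> h x = 0" using mh_nonneg[OF sd, of h x] by simp
  have pos: "\<And>x. \<rho> x > 0" using sd_facts[OF sd] by auto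
  have int: "integrable lborel (\<lambda>y. indicator (ball x h) y *\<^sub>R \<rho> y)"
    using sd_facts[OF sd] by (intro int_ind) auto
  have ae: "AE y in lborel. indicator (ball x h) y *\<^sub>R \<rho> y = 0"
    using z int pos unfolding mh_def set_lebesgue_integral_def
    by (subst integral_nonneg_eq_0_iff_AE[symmetric]) (auto simp: less_imp_le)
  have imp: "y \<notin> ball x h" if "indicator (ball x h) y *\<^sub>R \<rho> y = 0" for y
    using that pos[of y] by (cases "y \<in> ball x h") auto
  have "AE y in lborel. y \<notin> ball x h"
    using ae by (rule eventually_mono) (rule imp)
  then have "emeasure lborel (ball x h) = 0"
    by (subst (asm) AE_iff_measurable[where N="ball x h"]) auto
  then have "measure lborel (ball x h) = 0" by (simp add: measure_def)
  then show False using h by simp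
qed

lemma Tn_bound:
  fixes \<rho> :: "'a::euclidean_space \<Rightarrow> real"
  assumes sd: "standing_density \<rho>"
  shows "\<bar>Tn \<rho> h n y A\<bar> \<le> 1"
proof (induction n arbitrary: y)
  case 0
  then show ?case by (simp add: indicator_def)
next
  case (Suc n)
  have pos: "\<And>x. \<rho> x > 0" using sd_facts[OF sd] by auto
  let ?g = "\<lambda>z. indicator (ball y h) z *\<^sub>R (Tn \<rho> h n z A * \<rho> z)"
  have int: "integrable lborel (\<lambda>z. indicator (ball y h) z *\<^sub>R \<rho> z)"
    using sd_facts[OF sd] by (intro int_ind) auto
  have b: "\<bar>(LINT z|lborel. ?g z)\<bar> \<le> mh \<rho> h y"
  proof (cases "integrable lborel ?g")
    case True
    show ?thesis unfolding mh_def set_lebesgue_integral_def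
    proof (rule integral_abs_bound_integral[OF True int])
      fix z
      have "\<bar>Tn \<rho> h n z A * \<rho> z\<bar> \<le> \<rho> z"
        using Suc.IH[of z] pos[of z] by (simp add: abs_mult mult_left_le_one_le)
      then show "\<bar>?g z\<bar> \<le> indicator (ball y h) z *\<^sub>R \<rho> z"
        by (simp add: indicator_def)
    qed
  next
    case False
    then show ?thesis using mh_nonneg[OF sd] by (simp add: not_integrable_integral_eq)
  qed
  have "Tn \<rho> h (Suc n) y A = (LINT z|lborel. ?g z) / mh \<rho> h y"
    by (simp add: set_lebesgue_integral_def)
  moreover have "\<bar>(LINT z|lborel. ?g z) / mh \<rho> h y\<bar> \<le> 1"
    using b mh_nonneg[OF sd, of h y]
    by (cases "mh \<rho> h y = 0") (auto simp: abs_divide divide_le_eq_1)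
  ultimately show ?case by (simp del: Tn.simps)
qed

lemma Tn_one:
  fixes \<rho> :: "'a::euclidean_space \<Rightarrow> real"
  assumes sd: "standing_density \<rho>" and h: "h > 0"
  shows "cball y (real n * h) \<subseteq> A \<Longrightarrow> Tn \<rho> h n y A = 1"
proof (induction n arbitrary: y)
  case 0
  then show ?case by (simp add: indicator_def)
next
  case (Suc n)
  have eq: "indicator (ball y h) z * (Tn \<rho> h n z A * \<rho> z) = indicator (ball y h) z * \<rho> z" for z
  proof (cases "z \<in> ball y h")
    case True
    have "cball z (real n * h) \<subseteq> A"
    proof
      fix w assume "w \<in> cball z (real n * h)"
      then have "dist y w < real (Suc n) * h" using True dist_triangle[of y w z]
        by (auto simp: algebra_simps)
      then show "w \<in> A" using Suc.prems by auto
    qed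
    then show ?thesis using Suc.IH by simp
  qed simp
  have "Tn \<rho> h (Suc n) y A = mh \<rho> h y / mh \<rho> h y"
    by (simp add: set_lebesgue_integral_def eq mh_def)
  then show ?case using mh_pos[OF sd h, of y] by simp
qed

lemma nu_bound:
  fixes \<rho> :: "'a::euclidean_space \<Rightarrow> real"
  assumes sd: "standing_density \<rho>"
  shows "\<bar>nu_h \<rho> h A\<bar> \<le> 1"
proof -
  have pos: "\<And>x. \<rho> x > 0" using sd_facts[OF sd] by auto
  have fnn: "mh \<rho> h y * \<rho> y \<ge> 0" for y using mh_nonneg[OF sd] pos[of y] by simp
  define Z where "Z = (LINT y|lborel. mh \<rho> h y * \<rho> y)"
  define N where "N = (LINT y:A|lborel. mh \<rho> h y * \<rho> y)"
  have N0: "N \<ge> 0" unfolding N_def set_lebesgue_integral_def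
    using fnn by (intro Bochner_Integration.integral_nonneg) simp
  show ?thesis
  proof (cases "Z = 0")
    case True
    then show ?thesis by (simp add: nu_h_def Z_def)
  next
    case False
    then have int: "integrable lborel (\<lambda>y. mh \<rho> h y * \<rho> y)"
      unfolding Z_def using not_integrable_integral_eq by blast
    have "N \<le> Z" unfolding N_def Z_def set_lebesgue_integral_def
      using fnn by (intro integral_mono'[OF int]) (auto simp: indicator_def)
    then show ?thesis using N0 False by (simp add: nu_h_def N_def[symmetric] Z_def[symmetric] abs_divide divide_le_eq_1)
  qed
qed

lemma tv_ge:
  fixes \<rho> :: "'a::euclidean_space \<Rightarrow> real"
  assumes sd: "standing_density \<rho>" and A: "A0 \<in> sets borel"
  shows "tv_dist (Tn \<rho> h n x) (nu_h \<rho> h) \<ge> \<bar>Tn \<rho> h n x A0 - nu_h \<rho> h A0\<bar>"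
  unfolding tv_dist_def
proof (rule cSup_upper)
  show "\<bar>Tn \<rho> h n x A0 - nu_h \<rho> h A0\<bar> \<in> {\<bar>Tn \<rho> h n x A - nu_h \<rho> h A\<bar> |A. A \<in> sets borel}"
    using A by blast
  show "bdd_above {\<bar>Tn \<rho> h n x A - nu_h \<rho> h A\<bar> |A. A \<in> sets borel}"
  proof (rule bdd_aboveI[where M=2], clarify)
    fix A
    show "\<bar>Tn \<rho> h n x A - nu_h \<rho> h A\<bar> \<le> 2"
      using Tn_bound[OF sd, of h n x A] nu_bound[OF sd, of h A] by linarith
  qed
qed

lemma rho2_int:
  fixes \<rho> :: "'a::euclidean_space \<Rightarrow> real"
  assumes sd: "standing_density \<rho>"
  shows "integrable lborel (\<lambda>y. (\<rho> y)\<^sup>2)"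
proof -
  obtain B where B: "\<And>x. \<rho> x \<le> B" using sd_facts(4)[OF sd] by blast
  have pos: "\<And>x. \<rho> x > 0" using sd_facts[OF sd] by auto
  have m: "\<rho> \<in> borel_measurable lborel" using sd_facts(3)[OF sd] .
  have i1: "integrable lborel (\<lambda>y. B * \<rho> y)" using sd_facts(2)[OF sd] by simp
  have m2: "(\<lambda>y. (\<rho> y)\<^sup>2) \<in> borel_measurable lborel" using m by measurable
  have ae: "AE x in lborel. norm ((\<rho> x)\<^sup>2) \<le> norm (B * \<rho> x)"
  proof (rule AE_I2)
    fix x
    have "(\<rho> x)\<^sup>2 \<le> B * \<rho> x" using B[of x] pos[of x] by (simp add: power2_eq_square)
    then show "norm ((\<rho> x)\<^sup>2) \<le> norm (B * \<rho> x)" using pos[of x] by simp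
  qed
  show ?thesis by (rule Bochner_Integration.integrable_bound[OF i1 m2 ae])
qed

lemma Q_pos:
  fixes \<rho> :: "'a::euclidean_space \<Rightarrow> real"
  assumes sd: "standing_density \<rho>"
  shows "(LINT y|lborel. (\<rho> y)\<^sup>2) > 0"
proof (rule ccontr)
  have pos: "\<And>x. \<rho> x > 0" using sd_facts[OF sd] by auto
  assume "\<not> (LINT y|lborel. (\<rho> y)\<^sup>2) > 0"
  moreover have "(LINT y|lborel. (\<rho> y)\<^sup>2) \<ge> 0"
    by (intro Bochner_Integration.integral_nonneg) simp
  ultimately have "(LINT y|lborel. (\<rho> y)\<^sup>2) = 0" by linarith
  then have "AE y in lborel. (\<rho> y)\<^sup>2 = 0"
    using integral_nonneg_eq_0_iff_AE[OF rho2_int[OF sd]] by simp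
  moreover have nz: "\<And>y. \<rho> y \<noteq> 0" using pos by (metis less_irrefl)
  ultimately have "emeasure lborel (UNIV::'a set) = 0"
    by (subst (asm) AE_iff_measurable[where N=UNIV]) auto
  then show False by simp
qed

lemma nu_tempered:
  fixes \<rho> :: "'a::euclidean_space \<Rightarrow> real"
  assumes sd: "standing_density \<rho>" and K: "K > 0"
    and harn: "\<And>y z. dist y z < 1 \<Longrightarrow> \<rho> z \<le> K * \<rho> y"
    and h: "0 < h" "h \<le> 1" and AS: "A \<subseteq> S" and Ab: "A \<in> sets borel" and Sb: "S \<in> sets borel"
  shows "nu_h \<rho> h A \<le> (K\<^sup>2 / (LINT y|lborel. (\<rho> y)\<^sup>2)) * (LINT y:S|lborel. (\<rho> y)\<^sup>2)"
proof -
  have pos: "\<And>x. \<rho> x > 0" using sd_facts[OF sd] by auto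
  have rint: "integrable lborel \<rho>" using sd_facts[OF sd] by auto
  have r2: "integrable lborel (\<lambda>y. (\<rho> y)\<^sup>2)" using rho2_int[OF sd] .
  define Q where "Q = (LINT y|lborel. (\<rho> y)\<^sup>2)"
  define P where "P = (LINT y:S|lborel. (\<rho> y)\<^sup>2)"
  define V where "V = measure lborel (ball (0::'a) h)"
  have Q0: "Q > 0" unfolding Q_def using Q_pos[OF sd] .
  have P0: "P \<ge> 0" unfolding P_def set_lebesgue_integral_def
    by (intro Bochner_Integration.integral_nonneg) simp
  have V0: "V > 0" unfolding V_def using h by simp
  have Vy: "measure lborel (ball (y::'a) h) = V" for y unfolding V_def using h by (simp add: content_ball)
  have iball: "integrable lborel (\<lambda>z. c * indicator (ball (y::'a) h) z :: real)" for c y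
    using emeasure_lborel_ball_finite[of y h] by (intro integrable_mult_right) simp
  have mh_le: "mh \<rho> h y \<le> K * \<rho> y * V" for y
  proof -
    have "mh \<rho> h y \<le> (LINT z|lborel. K * \<rho> y * indicator (ball y h) z)"
      unfolding mh_def set_lebesgue_integral_def
    proof (rule integral_mono'[OF iball])
      fix z
      show "indicator (ball y h) z *\<^sub>R \<rho> z \<le> K * \<rho> y * indicator (ball y h) z"
        using harn[of y z] h by (auto simp: indicator_def)
      show "0 \<le> K * \<rho> y * indicator (ball y h) z" using K pos[of y] by simp
    qed
    also have "\<dots> = K * \<rho> y * V" using Vy[of y] by simp
    finally show ?thesis .
  qed
  have mh_ge: "\<rho> y / K * V \<le> mh \<rho> h y" for y
  proof -
    have "\<rho> y / K * V = (LINT z|lborel. \<rho> y / K * indicator (ball y h) z)" using Vy[of y] by simp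
    also have "\<dots> \<le> mh \<rho> h y"
      unfolding mh_def set_lebesgue_integral_def
    proof (rule integral_mono[OF iball])
      show "integrable lborel (\<lambda>z. indicator (ball y h) z *\<^sub>R \<rho> z)"
        using rint by (intro int_ind) auto
      fix z
      have "\<rho> y \<le> K * \<rho> z" if "dist z y < 1" using harn that by blast
      then show "\<rho> y / K * indicator (ball y h) z \<le> indicator (ball y h) z *\<^sub>R \<rho> z"
        using h K by (auto simp: indicator_def divide_le_eq dist_commute mult.commute)
    qed
    finally show ?thesis .
  qed
  define Z where "Z = (LINT y|lborel. mh \<rho> h y * \<rho> y)"
  define N where "N = (LINT y:A|lborel. mh \<rho> h y * \<rho> y)"
  have RHS0: "(K\<^sup>2 / Q) * P \<ge> 0" using Q0 P0 by simp
  show ?thesis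
  proof (cases "Z = 0")
    case True
    then show ?thesis using RHS0 by (simp add: nu_h_def Z_def Q_def P_def)
  next
    case False
    then have fint: "integrable lborel (\<lambda>y. mh \<rho> h y * \<rho> y)"
      unfolding Z_def using not_integrable_integral_eq by blast
    have PA: "(LINT y:A|lborel. (\<rho> y)\<^sup>2) \<le> P"
      unfolding P_def set_lebesgue_integral_def
      using AS Ab Sb r2 by (intro integral_mono int_ind) (auto simp: indicator_def)
    have "N \<le> (LINT y|lborel. indicator A y *\<^sub>R (K * V * (\<rho> y)\<^sup>2))"
      unfolding N_def set_lebesgue_integral_def
    proof (rule integral_mono')
      show "integrable lborel (\<lambda>y. indicator A y *\<^sub>R (K * V * (\<rho> y)\<^sup>2))"
        using r2 Ab by (intro int_ind) auto
      fix y
      have "mh \<rho> h y * \<rho> y \<le> K * V * (\<rho> y)\<^sup>2"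
        using mh_le[of y] pos[of y] by (simp add: power2_eq_square mult_ac)
      then show "indicator A y *\<^sub>R (mh \<rho> h y * \<rho> y) \<le> indicator A y *\<^sub>R (K * V * (\<rho> y)\<^sup>2)"
        by (simp add: indicator_def)
      show "0 \<le> indicator A y *\<^sub>R (K * V * (\<rho> y)\<^sup>2)" using K V0 by simp
    qed
    also have "\<dots> = K * V * (LINT y:A|lborel. (\<rho> y)\<^sup>2)"
      by (simp add: set_lebesgue_integral_def mult_ac)
    also have "\<dots> \<le> K * V * P" using PA K V0 by simp
    finally have NP: "N \<le> K * V * P" .
    have "V / K * Q = (LINT y|lborel. V / K * (\<rho> y)\<^sup>2)" by (simp add: Q_def)
    also have "\<dots> \<le> Z" unfolding Z_def
    proof (rule integral_mono[OF _ fint])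
      show "integrable lborel (\<lambda>y. V / K * (\<rho> y)\<^sup>2)" using r2 by simp
      fix y
      have "(\<rho> y / K * V) * \<rho> y \<le> mh \<rho> h y * \<rho> y"
        using mh_ge[of y] pos[of y] by (intro mult_right_mono) auto
      moreover have "V / K * (\<rho> y)\<^sup>2 = (\<rho> y / K * V) * \<rho> y"
        by (simp add: power2_eq_square field_simps)
      ultimately show "V / K * (\<rho> y)\<^sup>2 \<le> mh \<rho> h y * \<rho> y" by (simp only:)
    qed
    finally have ZQ: "V / K * Q \<le> Z" .
    have VKQ: "V / K * Q > 0" using V0 K Q0 by simp
    have Zp: "0 < Z" using ZQ VKQ by linarith
    have ZZ: "0 < Z * (V / K * Q)" using Zp VKQ by (rule mult_pos_pos)
    have KVP: "0 \<le> K * V * P" using K V0 P0 by simp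
    have "nu_h \<rho> h A = N / Z" by (simp add: nu_h_def N_def Z_def)
    also have "\<dots> \<le> (K * V * P) / Z" using NP ZQ VKQ by (simp add: divide_right_mono)
    also have "(K * V * P) / Z \<le> (K * V * P) / (V / K * Q)"
      by (rule divide_left_mono[OF ZQ KVP ZZ])
    also have "\<dots> = (K\<^sup>2 / Q) * P" using K V0 Q0 by (simp add: field_simps power2_eq_square)
    finally show ?thesis by (simp add: Q_def P_def)
  qed
qed

lemma translate_int:
  fixes f :: "'a::euclidean_space \<Rightarrow> real"
  assumes "f \<in> borel_measurable borel"
  shows "(LINT z|lborel. f z) = (LINT z|lborel. f (w + z))"
proof -
  have "(LINT z|lborel. f (w + z)) = integral\<^sup>L (distr lborel borel ((+) w)) f"
    using assms by (subst integral_distr) auto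
  then show ?thesis by (simp add: lborel_distr_plus)
qed

lemma norm_shift_sq:
  fixes u z :: "'a::euclidean_space"
  assumes "norm u = 1"
  shows "(norm (c *\<^sub>R u + z))\<^sup>2 = (norm z)\<^sup>2 + 2 * c * (z \<bullet> u) + c\<^sup>2"
proof -
  have uu: "u \<bullet> u = 1" using assms by (simp add: dot_square_norm)
  have "(norm (c *\<^sub>R u + z))\<^sup>2 = (c *\<^sub>R u + z) \<bullet> (c *\<^sub>R u + z)"
    by (simp only: power2_norm_eq_inner)
  also have "\<dots> = c * c * (u \<bullet> u) + 2 * c * (z \<bullet> u) + z \<bullet> z"
    by (simp add: inner_add_left inner_add_right inner_commute algebra_simps)
  finally show ?thesis using uu by (simp add: dot_square_norm power2_eq_square)
qed

lemma nu_gauss: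
  fixes \<rho> :: "'a::euclidean_space \<Rightarrow> real"
  assumes sd: "standing_density \<rho>" and a: "\<alpha> > 0" and b: "\<beta> > 0"
    and rho: "\<And>x. \<rho> x = \<beta> * exp (- \<alpha> * (norm x)\<^sup>2)"
    and h: "h > 0" and u: "norm u = 1" and c: "c = \<tau> + h" and t0: "\<tau> \<ge> 0"
  shows "nu_h \<rho> h {y. c \<le> y \<bullet> u} \<le> exp (- (2 * \<alpha> * c * \<tau>))"
proof -
  have pos: "\<And>x. \<rho> x > 0" using sd_facts[OF sd] by auto
  have rint: "integrable lborel \<rho>" using sd_facts[OF sd] by auto
  have rmeas: "\<rho> \<in> borel_measurable borel" using sd_facts(3)[OF sd] by simp
  define w where "w = c *\<^sub>R u"
  define E1 where "E1 = exp (- \<alpha> * (c\<^sup>2 - 2 * c * h))"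
  define E2 where "E2 = exp (- \<alpha> * c\<^sup>2)"
  have rho_shift: "\<rho> (w + z) = \<rho> z * exp (- \<alpha> * (2 * c * (z \<bullet> u) + c\<^sup>2))" for z
    unfolding w_def rho norm_shift_sq[OF u]
    by (simp add: algebra_simps exp_add[symmetric])
  have rho_le1: "\<rho> (w + z) \<le> \<rho> z * E1" if "z \<bullet> u \<ge> - h" for z
  proof -
    have "- \<alpha> * (2 * c * (z \<bullet> u) + c\<^sup>2) \<le> - \<alpha> * (c\<^sup>2 - 2 * c * h)"
    proof -
      have "0 \<le> \<alpha> * (c * (z \<bullet> u + h))"
        using that a h c t0 by (intro mult_nonneg_nonneg) auto
      then show ?thesis by (simp add: algebra_simps)
    qed
    then show ?thesis unfolding rho_shift E1_def using pos[of z] by simp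
  qed
  have rho_le2: "\<rho> (w + z) \<le> \<rho> z * E2" if "z \<bullet> u \<ge> 0" for z
  proof -
    have "- \<alpha> * (2 * c * (z \<bullet> u) + c\<^sup>2) \<le> - \<alpha> * c\<^sup>2"
    proof -
      have "0 \<le> \<alpha> * (c * (z \<bullet> u))"
        using that a h c t0 by (intro mult_nonneg_nonneg) auto
      then show ?thesis by (simp add: algebra_simps)
    qed
    then show ?thesis unfolding rho_shift E2_def using pos[of z] by simp
  qed
  have mh_shift: "mh \<rho> h (w + y) \<le> E1 * mh \<rho> h y" if "y \<bullet> u \<ge> 0" for y
  proof -
    have "mh \<rho> h (w + y) = (LINT z|lborel. indicator (ball (w + y) h) z * \<rho> z)"
      by (simp add: mh_def set_lebesgue_integral_def)
    also have "\<dots> = (LINT z|lborel. indicator (ball (w + y) h) (w + z) * \<rho> (w + z))"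
      using rmeas by (intro translate_int borel_measurable_times borel_measurable_indicator) auto
    also have "\<dots> = (LINT z|lborel. indicator (ball y h) z * \<rho> (w + z))"
      by (simp add: indicator_def dist_norm)
    also have "\<dots> \<le> (LINT z|lborel. E1 * (indicator (ball y h) z *\<^sub>R \<rho> z))"
    proof (rule integral_mono')
      show "integrable lborel (\<lambda>z. E1 * (indicator (ball y h) z *\<^sub>R \<rho> z))"
        using rint by (intro integrable_mult_right int_ind) auto
      fix z
      show "0 \<le> E1 * (indicator (ball y h) z *\<^sub>R \<rho> z)" using pos[of z] by (simp add: E1_def)
      show "indicator (ball y h) z * \<rho> (w + z) \<le> E1 * (indicator (ball y h) z *\<^sub>R \<rho> z)"
      proof (cases "z \<in> ball y h")
        case True
        have "\<bar>(z - y) \<bullet> u\<bar> \<le> norm (z - y) * norm u" by (rule Cauchy_Schwarz_ineq2)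
        then have "z \<bullet> u \<ge> - h" using True that u
          by (auto simp: dist_norm norm_minus_commute inner_diff_left)
        then show ?thesis using True rho_le1[of z] by (simp add: mult_ac)
      qed simp
    qed
    also have "\<dots> = E1 * mh \<rho> h y" by (simp add: mh_def set_lebesgue_integral_def)
    finally show ?thesis .
  qed
  define f where "f y = mh \<rho> h y * \<rho> y" for y
  have fnn: "f y \<ge> 0" for y using mh_nonneg[OF sd] pos[of y] by (simp add: f_def)
  have f_shift: "f (w + y) \<le> (E1 * E2) * f y" if "y \<bullet> u \<ge> 0" for y
  proof -
    have "f (w + y) \<le> (E1 * mh \<rho> h y) * (\<rho> y * E2)"
      unfolding f_def using mh_shift[OF that] rho_le2[OF that] mh_nonneg[OF sd] pos
      by (intro mult_mono) (auto simp: E1_def less_imp_le)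
    then show ?thesis by (simp add: f_def mult_ac)
  qed
  have E: "E1 * E2 = exp (- (2 * \<alpha> * c * \<tau>))"
    unfolding E1_def E2_def by (simp add: exp_add[symmetric] c power2_eq_square algebra_simps)
  define A where "A = {y. c \<le> y \<bullet> u}"
  define Z where "Z = (LINT y|lborel. f y)"
  define N where "N = (LINT y|lborel. indicator A y * f y)"
  have nu_eq: "nu_h \<rho> h A = N / Z"
    by (simp add: nu_h_def N_def Z_def f_def set_lebesgue_integral_def)
  have Z0: "Z \<ge> 0" unfolding Z_def using fnn by (intro Bochner_Integration.integral_nonneg) auto
  have EE: "E1 * E2 > 0" by (simp add: E1_def E2_def)
  show ?thesis
  proof (cases "Z = 0")
    case True
    then show ?thesis using nu_eq A_def by simp
  next
    case False
    then have fint: "integrable lborel f"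
      unfolding Z_def using not_integrable_integral_eq by blast
    have Zp: "Z > 0" using Z0 False by simp
    have "N \<le> (E1 * E2) * Z"
    proof (cases "(\<lambda>y. indicator A y * f y) \<in> borel_measurable borel")
      case True
      have "N = (LINT y|lborel. indicator A (w + y) * f (w + y))"
        unfolding N_def using True by (rule translate_int)
      also have "\<dots> \<le> (LINT y|lborel. (E1 * E2) * f y)"
      proof (rule integral_mono')
        show "integrable lborel (\<lambda>y. (E1 * E2) * f y)" using fint by simp
        fix y
        show "0 \<le> (E1 * E2) * f y" using EE fnn[of y] by simp
        show "indicator A (w + y) * f (w + y) \<le> (E1 * E2) * f y"
        proof (cases "w + y \<in> A")
          case True
          then have "y \<bullet> u \<ge> 0" using u by (simp add: A_def w_def inner_add_left dot_square_norm)
          then show ?thesis using True f_shift[of y] by simp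
        qed (use EE fnn[of y] in simp)
      qed
      also have "\<dots> = (E1 * E2) * Z" by (simp add: Z_def)
      finally show ?thesis .
    next
      case False
      then have "\<not> integrable lborel (\<lambda>y. indicator A y * f y)"
        using borel_measurable_integrable by fastforce
      then have "N = 0" unfolding N_def by (simp add: not_integrable_integral_eq)
      then show ?thesis using EE Z0 by simp
    qed
    then have "N / Z \<le> E1 * E2" using Zp by (simp add: divide_le_eq)
    then show ?thesis using nu_eq E by (simp add: A_def)
  qed
qed

theorem theorem5p2:
  fixes \<rho> :: "'a::euclidean_space \<Rightarrow> real" and \<alpha> \<beta> :: real
  assumes "standing_density \<rho>"
  shows "(tempered_exp \<rho> \<longrightarrow>
            (\<exists>C>0. \<forall>(n::nat) h \<tau> (x::'a). 0 < h \<and> h \<le> 1 \<and> \<tau> > 0 \<and> norm x \<ge> \<tau> + (real n + 1) * h \<longrightarrow>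
               tv_dist (Tn \<rho> h n x) (nu_h \<rho> h)
                 \<ge> 1 - C * (LINT y:{y. norm y \<ge> \<tau>}|lborel. (\<rho> y)\<^sup>2)))
       \<and> ((\<alpha> > 0 \<and> \<beta> > 0 \<and> (\<forall>x. \<rho> x = \<beta> * exp (- \<alpha> * (norm x)\<^sup>2))) \<longrightarrow>
            (\<exists>C>0. \<forall>(n::nat) h \<tau> (x::'a). 0 < h \<and> h \<le> 1 \<and> \<tau> > 0 \<and> norm x \<ge> \<tau> + (real n + 1) * h \<longrightarrow>
               tv_dist (Tn \<rho> h n x) (nu_h \<rho> h)
                 \<ge> 1 - C * exp (- 2 * \<alpha> * \<tau> * (\<tau> - h))))"
proof (intro conjI impI)
  have sd: "standing_density \<rho>" by fact
  have pos: "\<And>x. \<rho> x > 0" using sd_facts[OF sd] by auto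
  {
    assume te: "tempered_exp \<rho>"
    obtain M where M0: "M \<ge> 0" and M: "\<And>y z. \<bar>ln (\<rho> z) - ln (\<rho> y)\<bar> \<le> M * norm (z - y)"
      using harnack_log[OF sd te] by blast
    define K where "K = exp M"
    have K0: "K > 0" by (simp add: K_def)
    have harn: "\<rho> z \<le> K * \<rho> y" if "dist y z < 1" for y z
    proof -
      have "ln (\<rho> z) - ln (\<rho> y) \<le> M * norm (z - y)" using M[of z y] by linarith
      also have "\<dots> \<le> M" using that M0 by (simp add: dist_norm norm_minus_commute mult_left_le)
      finally have "ln (\<rho> z) \<le> ln (\<rho> y) + M" by simp
      then have "exp (ln (\<rho> z)) \<le> exp (ln (\<rho> y) + M)" by simp
      then show ?thesis using pos[of z] pos[of y] by (simp add: exp_add K_def mult.commute)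
    qed
    define Q where "Q = (LINT y|lborel. (\<rho> y)\<^sup>2)"
    have Q0: "Q > 0" unfolding Q_def using Q_pos[OF sd] .
    show "\<exists>C>0. \<forall>(n::nat) h \<tau> (x::'a). 0 < h \<and> h \<le> 1 \<and> \<tau> > 0 \<and> norm x \<ge> \<tau> + (real n + 1) * h \<longrightarrow>
               tv_dist (Tn \<rho> h n x) (nu_h \<rho> h)
                 \<ge> 1 - C * (LINT y:{y. norm y \<ge> \<tau>}|lborel. (\<rho> y)\<^sup>2)"
    proof (intro exI[of _ "K\<^sup>2 / Q"] conjI allI impI)
      show "K\<^sup>2 / Q > 0" using K0 Q0 by simp
      fix n :: nat and h \<tau> :: real and x :: 'a
      assume H: "0 < h \<and> h \<le> 1 \<and> \<tau> > 0 \<and> norm x \<ge> \<tau> + (real n + 1) * h"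
      define A where "A = {y::'a. \<tau> + h \<le> norm y}"
      define S where "S = {y::'a. \<tau> \<le> norm y}"
      have Ab: "A \<in> sets borel" unfolding A_def by measurable
      have Sb: "S \<in> sets borel" unfolding S_def by measurable
      have AS: "A \<subseteq> S" unfolding A_def S_def using H by auto
      have sub: "cball x (real n * h) \<subseteq> A"
      proof
        fix y assume "y \<in> cball x (real n * h)"
        then have "dist x y \<le> real n * h" by simp
        moreover have "norm x \<le> norm y + dist x y"
          using norm_triangle_ineq3[of x y] by (simp add: dist_norm)
        ultimately show "y \<in> A" using H unfolding A_def by (simp add: algebra_simps)
      qed
      have T1: "Tn \<rho> h n x A = 1" using Tn_one[OF sd _ sub] H by blast
      have nuA: "nu_h \<rho> h A \<le> (K\<^sup>2 / Q) * (LINT y:S|lborel. (\<rho> y)\<^sup>2)"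
        unfolding Q_def using nu_tempered[OF sd K0 harn _ _ AS Ab Sb] H by blast
      have "1 - nu_h \<rho> h A \<le> tv_dist (Tn \<rho> h n x) (nu_h \<rho> h)"
        using tv_ge[OF sd Ab, of h n x] T1 by simp
      then show "tv_dist (Tn \<rho> h n x) (nu_h \<rho> h) \<ge> 1 - K\<^sup>2 / Q * (LINT y:{y. norm y \<ge> \<tau>}|lborel. (\<rho> y)\<^sup>2)"
        using nuA unfolding S_def by simp
    qed
  }
  {
    assume G: "\<alpha> > 0 \<and> \<beta> > 0 \<and> (\<forall>x. \<rho> x = \<beta> * exp (- \<alpha> * (norm x)\<^sup>2))"
    show "\<exists>C>0. \<forall>(n::nat) h \<tau> (x::'a). 0 < h \<and> h \<le> 1 \<and> \<tau> > 0 \<and> norm x \<ge> \<tau> + (real n + 1) * h \<longrightarrow>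
               tv_dist (Tn \<rho> h n x) (nu_h \<rho> h)
                 \<ge> 1 - C * exp (- 2 * \<alpha> * \<tau> * (\<tau> - h))"
    proof (intro exI[of _ 1] conjI allI impI)
      fix n :: nat and h \<tau> :: real and x :: 'a
      assume H: "0 < h \<and> h \<le> 1 \<and> \<tau> > 0 \<and> norm x \<ge> \<tau> + (real n + 1) * h"
      have "(real n + 1) * h > 0" using H by simp
      then have nx: "norm x > 0" using H by linarith
      define u where "u = x /\<^sub>R norm x"
      have u1: "norm u = 1" unfolding u_def using nx by simp
      have xu: "x \<bullet> u = norm x" unfolding u_def using nx
        by (simp add: dot_square_norm power2_eq_square)
      define c where "c = \<tau> + h"
      define A where "A = {y::'a. c \<le> y \<bullet> u}"
      have "closed A" unfolding A_def using closed_halfspace_ge[of c u] by (simp add: inner_commute)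
      then have Ab: "A \<in> sets borel" by simp
      have sub: "cball x (real n * h) \<subseteq> A"
      proof
        fix y assume "y \<in> cball x (real n * h)"
        then have d: "norm (y - x) \<le> real n * h" by (simp add: dist_norm norm_minus_commute)
        have "\<bar>(y - x) \<bullet> u\<bar> \<le> norm (y - x) * norm u" by (rule Cauchy_Schwarz_ineq2)
        then have "(y - x) \<bullet> u \<ge> - (real n * h)" using d u1 by simp
        then have "y \<bullet> u \<ge> norm x - real n * h" using xu by (simp add: inner_diff_left)
        then show "y \<in> A" using H unfolding A_def c_def by (simp add: algebra_simps)
      qed
      have T1: "Tn \<rho> h n x A = 1" using Tn_one[OF sd _ sub] H by blast
      have nuA: "nu_h \<rho> h A \<le> exp (- (2 * \<alpha> * c * \<tau>))"
        unfolding A_def using nu_gauss[OF sd _ _ _ _ u1 c_def] G H by auto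
      have "exp (- (2 * \<alpha> * c * \<tau>)) \<le> exp (- 2 * \<alpha> * \<tau> * (\<tau> - h))"
        using G H by (simp add: c_def algebra_simps)
      moreover have "1 - nu_h \<rho> h A \<le> tv_dist (Tn \<rho> h n x) (nu_h \<rho> h)"
        using tv_ge[OF sd Ab, of h n x] T1 by simp
      ultimately show "tv_dist (Tn \<rho> h n x) (nu_h \<rho> h) \<ge> 1 - 1 * exp (- 2 * \<alpha> * \<tau> * (\<tau> - h))"
        using nuA by linarith
    qed simp
  }
qed

end
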